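(* For every prime power $q$ and every integer $k\ge 2$, there exists an $[n,k]_q$ maximum weight spectrum (MWS) code with $n=2^{\theta_q(k-1)}-1$, where $\theta_q(k-1)=\frac{q^k-1}{q-1}$.
   Context: An $[n,k]_q$ code is a $k$-dimensional $\mathbb{F}_q$-linear subspace $\mathcal{C}$ of $\mathbb{F}_q^n$ with the Hamming weight $w(c)=|\{i: c_i\neq 0\}|$. Standing convention: codes of dimension $k\ge 2$ are non-degenerate, i.e. no coordinate position is identically zero on $\mathcal{C}$. The weight set is $w(\mathcal{C})=\{w(c): c\in\mathcal{C}\setminus\{0\}\}$. For integers $m\ge 0$, $\theta_q(m)=\frac{q^{m+1}-1}{q-1}$. One always has $|w(\mathcal{C})|\le\theta_q(k-1)$, and $\mathcal{C}$ is called a maximum weight spectrum (MWS) code if $|w(\mathcal{C})|=\theta_q(k-1)$. *)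

theory Defs
  imports Complex_Main "HOL-Library.Function_Algebras"
begin

text \<open>Vectors of F_q^n are represented as functions nat => 'a vanishing outside {0..<n}.
  Coordinatewise addition comes from Function_Algebras; scalar multiplication is fscale.\<close>

definition fscale :: "'a::field \<Rightarrow> (nat \<Rightarrow> 'a) \<Rightarrow> (nat \<Rightarrow> 'a)" where
  "fscale c v = (\<lambda>i. c * v i)"

global_interpretation fs: vector_space "fscale :: 'a::field \<Rightarrow> (nat \<Rightarrow> 'a) \<Rightarrow> _"
  defines fsubspace = fs.subspace and fspan = fs.span and fdim = fs.dim
  unfolding vector_space_def by (auto simp: fscale_def fun_eq_iff algebra_simps)

definition ambient :: "nat \<Rightarrow> (nat \<Rightarrow> 'a::zero) set" where
  "ambient n = {v. \<forall>i\<ge>n. v i = 0}"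

definition hweight :: "nat \<Rightarrow> (nat \<Rightarrow> 'a::zero) \<Rightarrow> nat" where
  "hweight n v = card {i. i < n \<and> v i \<noteq> 0}"

definition linear_code :: "nat \<Rightarrow> nat \<Rightarrow> (nat \<Rightarrow> 'a::field) set \<Rightarrow> bool" where
  "linear_code n k C \<longleftrightarrow> C \<subseteq> ambient n \<and> fsubspace C
     \<and> fdim C = k"

definition non_degenerate :: "nat \<Rightarrow> (nat \<Rightarrow> 'a::zero) set \<Rightarrow> bool" where
  "non_degenerate n C \<longleftrightarrow> (\<forall>i<n. \<exists>c\<in>C. c i \<noteq> 0)"

definition weight_set :: "nat \<Rightarrow> (nat \<Rightarrow> 'a::zero) set \<Rightarrow> nat set" where
  "weight_set n C = hweight n ` (C - {0})"

definition theta :: "nat \<Rightarrow> nat \<Rightarrow> nat" where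
  "theta q m = (q ^ (m + 1) - 1) div (q - 1)"

definition MWS_code :: "nat \<Rightarrow> nat \<Rightarrow> (nat \<Rightarrow> 'a::{finite,field}) set \<Rightarrow> bool" where
  "MWS_code n k C \<longleftrightarrow> linear_code n k C \<and> (k \<ge> 2 \<longrightarrow> non_degenerate n C)
     \<and> card (weight_set n C) = theta (card (UNIV :: 'a set)) (k - 1)"

end

theory Submission
  imports Defs
begin

definition dlt :: "nat \<Rightarrow> nat \<Rightarrow> 'a::field" where "dlt a = (\<lambda>i. if i = a then 1 else 0)"
definition dot :: "nat \<Rightarrow> (nat \<Rightarrow> 'a::field) \<Rightarrow> (nat \<Rightarrow> 'a) \<Rightarrow> 'a" where
  "dot k x r = (\<Sum>l<k. x l * r l)"
definition lead :: "(nat \<Rightarrow> 'a::zero) \<Rightarrow> nat" where "lead v = (LEAST i. v i \<noteq> 0)"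
definition Rset :: "nat \<Rightarrow> (nat \<Rightarrow> 'a::field) set" where
  "Rset k = {v \<in> ambient k. v \<noteq> 0 \<and> v (lead v) = 1}"
definition blk :: "nat \<Rightarrow> nat set" where "blk i = {2^i - 1 ..< 2^(Suc i) - 1}"
definition Gm :: "nat \<Rightarrow> nat \<Rightarrow> (nat \<Rightarrow> nat \<Rightarrow> 'a::field) \<Rightarrow> (nat \<Rightarrow> 'a) \<Rightarrow> (nat \<Rightarrow> 'a)" where
  "Gm k t e x = (\<lambda>j. \<Sum>i<t. if j \<in> blk i then dot k x (e i) else 0)"

lemma sum_fun_apply: "(sum f A) (i::nat) = (\<Sum>a\<in>A. f a i)"
  by (induction A rule: infinite_finite_induct) auto

lemma lead_nz: "(v::nat \<Rightarrow> 'a::zero) \<noteq> 0 \<Longrightarrow> v (lead v) \<noteq> 0"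
proof -
  assume "v \<noteq> 0"
  then obtain i where "v i \<noteq> 0" by (auto simp: fun_eq_iff)
  then show ?thesis unfolding lead_def by (rule LeastI)
qed

lemma lead_min: "i < lead v \<Longrightarrow> v i = 0"
  unfolding lead_def by (rule not_less_Least[of i "\<lambda>i. v i \<noteq> 0", simplified])

lemma lead_lt: "v \<in> ambient k \<Longrightarrow> v \<noteq> 0 \<Longrightarrow> lead v < k"
proof (rule ccontr)
  assume "v \<in> ambient k" "v \<noteq> 0" "\<not> lead v < k"
  then show False using lead_nz[of v] unfolding ambient_def by simp
qed

lemma lead_eq: "v i \<noteq> 0 \<Longrightarrow> (\<forall>j<i. v j = 0) \<Longrightarrow> lead v = i"
proof -
  assume h: "v i \<noteq> 0" "\<forall>j<i. v j = 0"
  show ?thesis unfolding lead_def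
  proof (rule Least_equality)
    show "v i \<noteq> 0" by (rule h(1))
    show "\<And>y. v y \<noteq> 0 \<Longrightarrow> i \<le> y" using h(2) not_less by blast
  qed
qed

lemma lead_scale: "(c::'a::field) \<noteq> 0 \<Longrightarrow> lead (fscale c v) = lead v"
  unfolding lead_def fscale_def by simp

lemma ambient_subspace: "fsubspace (ambient k :: (nat \<Rightarrow> 'a::field) set)"
  by (auto simp: fs.subspace_def ambient_def fscale_def)

lemma dot_add: "dot k (x + y) r = dot k x r + dot k y r"
  by (simp add: dot_def distrib_right sum.distrib)
lemma dot_diff: "dot k x (r - s) = dot k x r - dot k x s"
  by (simp add: dot_def right_diff_distrib sum_subtractf)
lemma dot_scale_l: "dot k (fscale c x) r = c * dot k x r"
  by (simp add: dot_def fscale_def sum_distrib_left mult.assoc)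
lemma dot_scale_r: "dot k x (fscale c r) = c * dot k x r"
  by (simp add: dot_def fscale_def sum_distrib_left algebra_simps)
lemma dot_zero_l: "dot k 0 r = 0" by (simp add: dot_def)
lemma dot_zero_r: "dot k x 0 = 0" by (simp add: dot_def)
lemma dot_dlt_r: "b < k \<Longrightarrow> dot k x (dlt b) = x b"
  by (simp add: dot_def dlt_def if_distrib cong: if_cong)
lemma dot_dlt_l: "b < k \<Longrightarrow> dot k (dlt b) x = x b"
proof -
  assume b: "b < k"
  have "(\<Sum>l<k. dlt b l * x l) = (\<Sum>l<k. if l = b then x l else 0)" by (rule sum.cong) (auto simp: dlt_def)
  then show ?thesis using b by (simp add: dot_def)
qed

lemma dlt_eq: "((dlt b :: nat \<Rightarrow> 'a::field) = dlt a) = (b = a)"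
proof
  assume "(dlt b :: nat \<Rightarrow> 'a::field) = dlt a"
  then have "(dlt b :: nat \<Rightarrow> 'a::field) a = dlt a a" by simp
  then show "b = a" by (auto simp: dlt_def split: if_splits)
qed simp

lemma dlt_Rset: "a < k \<Longrightarrow> (dlt a :: nat \<Rightarrow> 'a::field) \<in> Rset k"
proof -
  assume a: "a < k"
  have l: "lead (dlt a :: nat \<Rightarrow> 'a) = a" by (rule lead_eq) (auto simp: dlt_def)
  have "(dlt a :: nat \<Rightarrow> 'a) \<noteq> 0" by (auto simp: dlt_def fun_eq_iff)
  with a l show ?thesis by (auto simp: Rset_def ambient_def dlt_def)
qed

lemma decomp: "v \<in> ambient k \<Longrightarrow> v \<noteq> 0 \<Longrightarrow>
   \<exists>c r. (c::'a::field) \<noteq> 0 \<and> r \<in> Rset k \<and> v = fscale c r"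
proof -
  assume v: "v \<in> ambient k" "v \<noteq> 0"
  define c where "c = v (lead v)"
  have c: "c \<noteq> 0" using lead_nz[OF v(2)] c_def by simp
  define r where "r = fscale (inverse c) v"
  have lr: "lead r = lead v" unfolding r_def using c by (simp add: lead_scale)
  have r1: "r (lead r) = 1" using c lr by (simp add: r_def fscale_def c_def)
  have r2: "r \<in> ambient k" using v(1) by (simp add: r_def ambient_def fscale_def)
  have r3: "r \<noteq> 0" using r1 by (metis zero_fun_apply zero_neq_one)
  have "r \<in> Rset k" using r1 r2 r3 by (simp add: Rset_def)
  moreover have "v = fscale c r" using c by (simp add: r_def fscale_def fun_eq_iff)
  ultimately show ?thesis using c by blast
qed

lemma scale_inj: "c \<noteq> 0 \<Longrightarrow> r \<in> Rset k \<Longrightarrow> r' \<in> Rset k \<Longrightarrow>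
   fscale (c::'a::field) r = fscale c' r' \<Longrightarrow> c = c' \<and> r = r'"
proof -
  assume h: "c \<noteq> 0" "r \<in> Rset k" "r' \<in> Rset k" "fscale (c::'a::field) r = fscale c' r'"
  have c': "c' \<noteq> 0"
  proof
    assume "c' = 0"
    then have "fscale c r = 0" using h(4) by (simp add: fscale_def fun_eq_iff)
    then have "r = 0" using h(1) by (simp add: fscale_def fun_eq_iff)
    then show False using h(2) by (simp add: Rset_def)
  qed
  have "lead r = lead r'" using lead_scale[OF h(1), of r] lead_scale[OF c', of r'] h(4) by simp
  moreover have "c * r (lead r) = c' * r' (lead r)" using h(4) by (simp add: fscale_def fun_eq_iff)
  ultimately have cc: "c = c'" using h(2,3) by (simp add: Rset_def)
  then have "r = r'" using h(1,4) by (auto simp: fscale_def fun_eq_iff)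
  then show ?thesis using cc by simp
qed

lemma Rset_sub: "Rset k \<subseteq> ambient k - {0}" by (auto simp: Rset_def)

lemma card_ambient: "finite (ambient k :: (nat \<Rightarrow> 'a::{finite,zero}) set) \<and>
    card (ambient k :: (nat \<Rightarrow> 'a) set) = card (UNIV :: 'a set)^k"
proof (induction k)
  case 0
  have "(ambient 0 :: (nat \<Rightarrow> 'a) set) = {0}" by (auto simp: ambient_def fun_eq_iff)
  then show ?case by simp
next
  case (Suc k)
  have "bij_betw (\<lambda>(w,a). w(k:=a)) ((ambient k :: (nat \<Rightarrow> 'a) set) \<times> UNIV) (ambient (Suc k))"
    by (rule bij_betw_byWitness[where f' = "\<lambda>v. (v(k:=0), v k)"]) (auto simp: ambient_def)
  then have f: "finite (ambient (Suc k) :: (nat \<Rightarrow> 'a) set)"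
    and c: "card (ambient (Suc k) :: (nat \<Rightarrow> 'a) set) = card ((ambient k :: (nat \<Rightarrow> 'a) set) \<times> (UNIV :: 'a set))"
    subgoal using Suc bij_betw_finite[OF \<open>bij_betw _ _ _\<close>] by simp
    subgoal using bij_betw_same_card[OF \<open>bij_betw _ _ _\<close>] by simp
    done
  show ?case using f c Suc by (simp add: card_cartesian_product)
qed


lemma card_field_ge2: "card (UNIV :: 'a::{finite,field} set) \<ge> 2"
proof -
  have "card {0::'a, 1} = 2" by simp
  moreover have "card {0::'a, 1} \<le> card (UNIV :: 'a set)" by (rule card_mono) auto
  ultimately show ?thesis by simp
qed

lemma card_Rset: "finite (Rset k :: (nat \<Rightarrow> 'a::{finite,field}) set) \<and>
   (card (UNIV :: 'a set) - 1) * card (Rset k :: (nat \<Rightarrow> 'a) set) = card (UNIV :: 'a set)^k - 1"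
proof -
  have b: "bij_betw (\<lambda>(c,r). fscale c r) ((UNIV - {0}) \<times> (Rset k :: (nat \<Rightarrow> 'a) set)) (ambient k - {0})"
  proof (rule bij_betw_imageI)
    show "inj_on (\<lambda>(c,r). fscale c r) ((UNIV - {0}) \<times> (Rset k :: (nat \<Rightarrow> 'a) set))"
      by (rule inj_onI) (auto dest: scale_inj)
    show "(\<lambda>(c,r). fscale c r) ` ((UNIV - {0}) \<times> (Rset k :: (nat \<Rightarrow> 'a) set)) = ambient k - {0}"
    proof
      show "(\<lambda>(c,r). fscale c r) ` ((UNIV - {0}) \<times> (Rset k :: (nat \<Rightarrow> 'a) set)) \<subseteq> ambient k - {0}"
      proof -
        have "fscale c r \<in> ambient k - {0}" if h: "c \<noteq> 0" "r \<in> Rset k" for c :: 'a and r :: "nat \<Rightarrow> 'a"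
        proof -
          have "fscale c r (lead r) = c" using h by (simp add: fscale_def Rset_def)
          then have "fscale c r \<noteq> 0" using h by (metis zero_fun_apply)
          moreover have "fscale c r \<in> ambient k" using h by (auto simp: Rset_def ambient_def fscale_def)
          ultimately show "fscale c r \<in> ambient k - {0}" by simp
        qed
        then show ?thesis by auto
      qed
      show "ambient k - {0} \<subseteq> (\<lambda>(c,r). fscale c r) ` ((UNIV - {0}) \<times> (Rset k :: (nat \<Rightarrow> 'a) set))"
      proof
        fix v :: "nat \<Rightarrow> 'a" assume "v \<in> ambient k - {0}"
        then obtain c r where "c \<noteq> 0" "r \<in> Rset k" "v = fscale c r" using decomp by blast
        then show "v \<in> (\<lambda>(c,r). fscale c r) ` ((UNIV - {0}) \<times> (Rset k :: (nat \<Rightarrow> 'a) set))"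
          by force
      qed
    qed
  qed
  have fa: "finite (ambient k :: (nat \<Rightarrow> 'a) set)" using card_ambient by blast
  have z: "(0::nat \<Rightarrow> 'a) \<in> ambient k" by (simp add: ambient_def)
  have fR: "finite (Rset k :: (nat \<Rightarrow> 'a) set)" using fa Rset_sub finite_subset by blast
  have "card ((UNIV - {0::'a}) \<times> (Rset k :: (nat \<Rightarrow> 'a) set)) = card (ambient k - {0::nat \<Rightarrow> 'a})"
    by (rule bij_betw_same_card[OF b])
  then have "(card (UNIV :: 'a set) - 1) * card (Rset k :: (nat \<Rightarrow> 'a) set) = card (ambient k :: (nat \<Rightarrow> 'a) set) - 1"
    using z fa by (simp add: card_cartesian_product)
  then show ?thesis using card_ambient fR by metis
qed

lemma sum_pow2: "(\<Sum>i<n. (2::nat)^i) = 2^n - 1"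
  by (induction n) auto

lemma sum_pow2_lt: "A \<subseteq> {..<n} \<Longrightarrow> (\<Sum>i\<in>A. (2::nat)^i) < 2^n"
proof -
  assume "A \<subseteq> {..<n}"
  then have "(\<Sum>i\<in>A. (2::nat)^i) \<le> (\<Sum>i<n. 2^i)" by (intro sum_mono2) auto
  also have "\<dots> < 2^n" using sum_pow2[of n] by simp
  finally show ?thesis .
qed

lemma sum_pow2_inj: "A \<subseteq> {..<n} \<Longrightarrow> B \<subseteq> {..<n} \<Longrightarrow>
   (\<Sum>i\<in>A. (2::nat)^i) = (\<Sum>i\<in>B. 2^i) \<Longrightarrow> A = B"
proof (induction n arbitrary: A B)
  case 0
  then show ?case by auto
next
  case (Suc n)
  have fA: "finite A" and fB: "finite B" using Suc.prems finite_subset by blast+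
  have sA: "A - {n} \<subseteq> {..<n}" and sB: "B - {n} \<subseteq> {..<n}" using Suc.prems by auto
  consider "n \<in> A" "n \<in> B" | "n \<in> A" "n \<notin> B" | "n \<notin> A" "n \<in> B" | "n \<notin> A" "n \<notin> B" by blast
  then show ?case
  proof cases
    case 1
    have "(\<Sum>i\<in>A - {n}. (2::nat)^i) = (\<Sum>i\<in>B - {n}. 2^i)"
      using Suc.prems(3) sum.remove[OF fA 1(1), of "\<lambda>i. (2::nat)^i"] sum.remove[OF fB 1(2), of "\<lambda>i. (2::nat)^i"] by simp
    then have "A - {n} = B - {n}" using Suc.IH[OF sA sB] by simp
    then show ?thesis using 1 by blast
  next
    case 2
    have "(\<Sum>i\<in>A. (2::nat)^i) \<ge> 2^n" using sum.remove[OF fA 2(1), of "\<lambda>i. (2::nat)^i"] by simp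
    moreover have "B \<subseteq> {..<n}" using Suc.prems(2) 2(2) by (auto simp: less_Suc_eq)
    ultimately show ?thesis using sum_pow2_lt[of B n] Suc.prems(3) by simp
  next
    case 3
    have "(\<Sum>i\<in>B. (2::nat)^i) \<ge> 2^n" using sum.remove[OF fB 3(2), of "\<lambda>i. (2::nat)^i"] by simp
    moreover have "A \<subseteq> {..<n}" using Suc.prems(1) 3(1) by (auto simp: less_Suc_eq)
    ultimately show ?thesis using sum_pow2_lt[of A n] Suc.prems(3) by simp
  next
    case 4
    have "A \<subseteq> {..<n}" using Suc.prems(1) 4(1) by (auto simp: less_Suc_eq)
    moreover have "B \<subseteq> {..<n}" using Suc.prems(2) 4(2) by (auto simp: less_Suc_eq)
    ultimately show ?thesis using Suc.IH Suc.prems(3) by blast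
  qed
qed

lemma blk_disj: "i \<noteq> i' \<Longrightarrow> blk i \<inter> blk i' = {}"
proof -
  have *: "blk i \<inter> blk i' = {}" if "i < i'" for i i'
  proof -
    have "(2::nat)^(Suc i) \<le> 2^i'" using that by (intro power_increasing) auto
    then have "(2::nat)^(Suc i) - 1 \<le> 2^i' - 1" by simp
    then show ?thesis by (auto simp: blk_def)
  qed
  assume "i \<noteq> i'"
  then show ?thesis using *[of i i'] *[of i' i] by (cases "i < i'") auto
qed

lemma card_blk: "card (blk i) = 2^i"
proof -
  have "(1::nat) \<le> 2^i" by simp
  then show ?thesis by (simp add: blk_def)
qed

lemma blk_cover: "j < 2^t - 1 \<Longrightarrow> \<exists>i<t. j \<in> blk i"
proof (induction t)
  case 0 then show ?case by simp
next
  case (Suc t)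
  show ?case
  proof (cases "j < 2^t - 1")
    case True then show ?thesis using Suc.IH less_Suc_eq by blast
  next
    case False
    then have "j \<in> blk t" using Suc.prems by (simp add: blk_def)
    then show ?thesis by blast
  qed
qed

lemma blk_bound: "i < t \<Longrightarrow> j \<in> blk i \<Longrightarrow> j < 2^t - 1"
proof -
  assume h: "i < t" "j \<in> blk i"
  have "(2::nat)^(Suc i) \<le> 2^t" using h by (intro power_increasing) auto
  then show ?thesis using h by (auto simp: blk_def)
qed

lemma Gm_val: "i0 < t \<Longrightarrow> j \<in> blk i0 \<Longrightarrow> Gm k t e x j = dot k x (e i0)"
proof -
  assume h: "i0 < t" "j \<in> blk i0"
  have "Gm k t e x j = (\<Sum>i<t. if i = i0 then dot k x (e i) else 0)"
    unfolding Gm_def using h blk_disj by (intro sum.cong) auto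
  then show ?thesis using h by simp
qed

lemma Gm_out: "\<not> j < 2^t - 1 \<Longrightarrow> Gm k t e x j = 0"
  unfolding Gm_def using blk_bound by (auto intro!: sum.neutral)

lemma Gm_add: "Gm k t e (x + y) = Gm k t e x + Gm k t e y"
  unfolding Gm_def by (auto simp: fun_eq_iff dot_add sum.distrib[symmetric] intro!: sum.cong)

lemma Gm_diff: "Gm k t e (x - y) = Gm k t e x - Gm k t e y"
proof -
  have "dot k (x - y) r = dot k x r - dot k y r" for r
    by (simp add: dot_def left_diff_distrib sum_subtractf)
  then show ?thesis
    unfolding Gm_def by (auto simp: fun_eq_iff sum_subtractf[symmetric] intro!: sum.cong)
qed

lemma Gm_scale: "Gm k t e (fscale c x) = fscale c (Gm k t e x)"
  unfolding Gm_def by (auto simp: fun_eq_iff fscale_def dot_scale_l[unfolded fscale_def] sum_distrib_left intro!: sum.cong)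

lemma Gm_hweight: "hweight (2^t - 1) (Gm k t e x) = (\<Sum>i\<in>{i. i < t \<and> dot k x (e i) \<noteq> 0}. 2^i)"
proof -
  let ?A = "{i. i < t \<and> dot k x (e i) \<noteq> 0}"
  have "{j. j < 2^t - 1 \<and> Gm k t e x j \<noteq> 0} = (\<Union>i\<in>?A. blk i)"
  proof
    show "{j. j < 2^t - 1 \<and> Gm k t e x j \<noteq> 0} \<subseteq> (\<Union>i\<in>?A. blk i)"
    proof
      fix j assume "j \<in> {j. j < 2^t - 1 \<and> Gm k t e x j \<noteq> 0}"
      then have j: "j < 2^t - 1" "Gm k t e x j \<noteq> 0" by auto
      obtain i where i: "i < t" "j \<in> blk i" using blk_cover[OF j(1)] by blast
      have "dot k x (e i) \<noteq> 0" using j(2) Gm_val[OF i, of k e x] by simp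
      then have "i \<in> ?A" using i by simp
      then show "j \<in> (\<Union>i\<in>?A. blk i)" using i by blast
    qed
    show "(\<Union>i\<in>?A. blk i) \<subseteq> {j. j < 2^t - 1 \<and> Gm k t e x j \<noteq> 0}"
    proof
      fix j assume "j \<in> (\<Union>i\<in>?A. blk i)"
      then obtain i where i: "i < t" "dot k x (e i) \<noteq> 0" "j \<in> blk i" by blast
      show "j \<in> {j. j < 2^t - 1 \<and> Gm k t e x j \<noteq> 0}"
        using Gm_val[OF i(1,3), of k e x] blk_bound[OF i(1,3)] i(2) by simp
    qed
  qed
  moreover have "card (\<Union>i\<in>?A. blk i) = (\<Sum>i\<in>?A. card (blk i))"
    apply (rule card_UN_disjoint)
      apply simp
     apply (simp add: blk_def)
    using blk_disj by blast
  ultimately show ?thesis by (simp add: hweight_def card_blk)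
qed


lemma separate:
  assumes x: "x \<in> Rset k" and y: "y \<in> Rset k" and xy: "x \<noteq> (y :: nat \<Rightarrow> 'a::field)"
  shows "\<exists>r\<in>Rset k. dot k x r = 0 \<and> dot k y r \<noteq> 0"
proof -
  define a where "a = lead x"
  have xa: "x a = 1" using x by (simp add: Rset_def a_def)
  have ak: "a < k" using x lead_lt unfolding a_def Rset_def by blast
  define z where "z = y - fscale (y a) x"
  have zamb: "z \<in> ambient k" using x y by (auto simp: z_def ambient_def Rset_def fscale_def)
  have znz: "z \<noteq> 0"
  proof
    assume "z = 0"
    then have yx: "y = fscale (y a) x" by (simp add: z_def)
    show False
    proof (cases "y a = 0")
      case True
      then have "y = 0" using yx by (simp add: fscale_def fun_eq_iff)
      then show False using y by (simp add: Rset_def)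
    next
      case False
      then have "lead y = a" using yx lead_scale[OF False, of x] a_def by simp
      then have "y a = 1" using y by (simp add: Rset_def)
      then have "y = x" using yx by (simp add: fscale_def fun_eq_iff)
      then show False using xy by simp
    qed
  qed
  define b where "b = lead z"
  have zb: "z b \<noteq> 0" using lead_nz[OF znz] b_def by simp
  have bk: "b < k" using lead_lt[OF zamb znz] b_def by simp
  define r0 :: "nat \<Rightarrow> 'a" where "r0 = dlt b - fscale (x b) (dlt a)"
  have d1: "dot k x r0 = 0" using ak bk xa by (simp add: r0_def dot_diff dot_scale_r dot_dlt_r)
  have d2a: "dot k y r0 = y b - x b * y a" using ak bk by (simp add: r0_def dot_diff dot_scale_r dot_dlt_r)
  have d2b: "z b = y b - y a * x b" by (simp add: z_def fscale_def)
  have d2: "dot k y r0 = z b" using d2a d2b by (simp add: mult.commute)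
  have r0nz: "r0 \<noteq> 0" using d2 zb dot_zero_r by metis
  have r0amb: "r0 \<in> ambient k" using ak bk by (auto simp: r0_def ambient_def dlt_def fscale_def)
  obtain c r where c: "c \<noteq> 0" "r \<in> Rset k" "r0 = fscale c r" using decomp[OF r0amb r0nz] by blast
  have "dot k x r = 0" using d1 c by (simp add: dot_scale_r)
  moreover have "dot k y r \<noteq> 0"
  proof
    assume "dot k y r = 0"
    then have "dot k y r0 = 0" using c by (simp add: dot_scale_r)
    then show False using d2 zb by simp
  qed
  ultimately show ?thesis using c(2) by blast
qed


theorem mainTheorem1:
  fixes k :: nat
  assumes "k \<ge> 2"
  shows "\<exists>C :: (nat \<Rightarrow> 'a::{finite,field}) set.
           MWS_code (2 ^ theta (card (UNIV :: 'a set)) (k - 1) - 1) k C"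
proof -
  define q where "q = card (UNIV :: 'a set)"
  define t where "t = theta q (k - 1)"
  define N where "N = (2::nat)^t - 1"
  define R where "R = (Rset k :: (nat \<Rightarrow> 'a) set)"
  have q2: "q \<ge> 2" unfolding q_def by (rule card_field_ge2)
  have finR: "finite R" and cR: "(q - 1) * card R = q^k - 1"
    using card_Rset[where k=k and 'a='a] unfolding R_def q_def by auto
  have cardR: "card R = t"
  proof -
    have "k - 1 + 1 = k" using assms by simp
    then have "t = (q^k - 1) div (q - 1)" unfolding t_def theta_def by simp
    also have "\<dots> = (q - 1) * card R div (q - 1)" using cR by simp
    also have "\<dots> = card R" using q2 by simp
    finally show ?thesis by simp
  qed
  obtain e where e: "bij_betw e {..<t} R"
    using ex_bij_betw_nat_finite[OF finR] cardR by (metis atLeast0LessThan)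
  have eR: "i < t \<Longrightarrow> e i \<in> R" for i using e by (auto simp: bij_betw_def)
  have Rall: "r \<in> R \<Longrightarrow> \<exists>i<t. e i = r" for r using e by (auto simp: bij_betw_def)
  define G where "G = Gm k t e"
  define A where "A x = {i. i < t \<and> dot k x (e i) \<noteq> 0}" for x :: "nat \<Rightarrow> 'a"
  define W where "W x = (\<Sum>i\<in>A x. (2::nat)^i)" for x
  have hw: "hweight N (G x) = W x" for x
    unfolding N_def G_def W_def A_def by (rule Gm_hweight)
  have Asub: "A x \<subseteq> {..<t}" for x by (auto simp: A_def)
  have kern: "A x \<noteq> {}" if kh: "x \<in> ambient k" "x \<noteq> 0" for x
  proof -
    define a where "a = lead x"
    have ak: "a < k" using lead_lt[OF kh] a_def by simp
    have "dlt a \<in> R" using dlt_Rset[OF ak] R_def by simp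
    then obtain i where i: "i < t" "e i = dlt a" using Rall by blast
    have "dot k x (e i) = x a" using i ak by (simp add: dot_dlt_r)
    then have "i \<in> A x" using i lead_nz[OF kh(2)] a_def by (simp add: A_def)
    then show ?thesis by blast
  qed
  have sep: "x = y" if sh: "x \<in> R" "y \<in> R" "A x = A y" for x y
  proof (rule ccontr)
    assume "x \<noteq> y"
    then obtain r where r: "r \<in> R" "dot k x r = 0" "dot k y r \<noteq> 0" using separate[of x k y] sh R_def by blast
    then obtain i where i: "i < t" "e i = r" using Rall by blast
    then have "i \<in> A y" "i \<notin> A x" using r by (auto simp: A_def)
    then show False using sh(3) by simp
  qed
  have Ascale: "A (fscale c x) = A x" if "c \<noteq> 0" for c x
    using that by (simp add: A_def dot_scale_l)
  have injW: "inj_on W R"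
  proof (rule inj_onI)
    fix x y assume h: "x \<in> R" "y \<in> R" "W x = W y"
    then have "A x = A y" using sum_pow2_inj[OF Asub Asub] unfolding W_def by blast
    then show "x = y" using sep h by blast
  qed
  have W0: "W x \<noteq> 0" if wh: "x \<in> ambient k" "x \<noteq> 0" for x
  proof -
    obtain i where "i \<in> A x" using kern[OF wh] by blast
    moreover have "finite (A x)" using Asub finite_subset by blast
    ultimately have "(2::nat)^i \<le> W x" unfolding W_def by (intro member_le_sum) auto
    moreover have "(0::nat) < 2^i" by simp
    ultimately show ?thesis by linarith
  qed
  have G0: "G 0 = 0" using Gm_diff[of k t e 0 0] by (simp add: G_def)
  have Gz: "G x \<noteq> 0" if gh: "x \<in> ambient k" "x \<noteq> 0" for x
  proof
    assume "G x = 0"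
    then have "hweight N (G x) = 0" by (simp add: hweight_def)
    then show False using hw W0[OF gh] by simp
  qed
  have injG: "inj_on G (ambient k)"
  proof (rule inj_onI)
    fix x y assume h: "x \<in> ambient k" "y \<in> ambient k" "G x = G y"
    have "G (x - y) = 0" using h(3) by (simp add: G_def Gm_diff)
    moreover have "x - y \<in> ambient k" using h by (simp add: ambient_def)
    ultimately show "x = y" using Gz by fastforce
  qed
  have hom: "module_hom fscale fscale G"
    unfolding module_hom_iff
    using fs.module_axioms by (simp add: G_def Gm_add Gm_scale)
  define C where "C = G ` ambient k"
  have sub: "fsubspace C"
    unfolding fs.subspace_def C_def
  proof (intro conjI ballI allI)
    show "0 \<in> G ` ambient k" using G0 by (force simp: ambient_def)
    fix u v assume "u \<in> G ` ambient k" "v \<in> G ` ambient k"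
    then obtain x y where "x \<in> ambient k" "y \<in> ambient k" "u = G x" "v = G y" by blast
    then show "u + v \<in> G ` ambient k"
      by (metis G_def Gm_add ambient_subspace fs.subspace_add image_eqI)
  next
    fix c u assume "u \<in> G ` ambient k"
    then obtain x where "x \<in> ambient k" "u = G x" by blast
    then show "fscale c u \<in> G ` ambient k"
      by (metis G_def Gm_scale ambient_subspace fs.subspace_scale image_eqI)
  qed
  have CA: "C \<subseteq> ambient N"
    by (auto simp: C_def G_def ambient_def N_def Gm_out)
  define D where "D = (dlt ` {..<k} :: (nat \<Rightarrow> 'a) set)"
  have injdlt: "inj_on (dlt :: nat \<Rightarrow> nat \<Rightarrow> 'a) {..<k}"
    by (rule inj_onI) (simp add: dlt_eq)
  have cD: "card D = k" using injdlt by (simp add: D_def card_image)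
  have DA: "D \<subseteq> ambient k" by (auto simp: D_def dlt_def ambient_def)
  have spanD: "fspan D = ambient k"
  proof
    show "fspan D \<subseteq> ambient k" by (rule fs.span_minimal[OF DA ambient_subspace])
    show "ambient k \<subseteq> fspan D"
    proof
      fix x :: "nat \<Rightarrow> 'a" assume x: "x \<in> ambient k"
      have "x = (\<Sum>l<k. fscale (x l) (dlt l))"
      proof (rule ext)
        fix i
        show "x i = (\<Sum>l<k. fscale (x l) (dlt l)) i"
        proof (cases "i < k")
          case True
          have "(\<Sum>l<k. fscale (x l) (dlt l)) i = (\<Sum>l<k. if l = i then x l else 0)"
            unfolding sum_fun_apply by (rule sum.cong) (auto simp: fscale_def dlt_def)
          then show ?thesis using True by simp
        next
          case False
          have "(\<Sum>l<k. fscale (x l) (dlt l)) i = (\<Sum>l<k. 0)"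
            unfolding sum_fun_apply using False by (intro sum.cong) (auto simp: fscale_def dlt_def)
          then show ?thesis using False x by (simp add: ambient_def)
        qed
      qed
      moreover have "(\<Sum>l<k. fscale (x l) (dlt l)) \<in> fspan D"
        by (intro fs.span_sum fs.span_scale fs.span_base) (auto simp: D_def)
      ultimately show "x \<in> fspan D" by simp
    qed
  qed
  have indD: "fs.independent D"
    unfolding fs.independent_explicit_finite_subsets
  proof (intro allI impI ballI)
    fix S u v assume S: "S \<subseteq> D" "finite S" and su: "(\<Sum>v\<in>S. fscale (u v) v) = 0" and v: "v \<in> S"
    obtain a where a: "a < k" "v = dlt a" using S v by (auto simp: D_def)
    have "(\<Sum>w\<in>S. fscale (u w) w) a = (\<Sum>w\<in>S. if w = v then u w else 0)"
      unfolding sum_fun_apply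
    proof (rule sum.cong)
      fix w assume w: "w \<in> S"
      then obtain b where b: "w = dlt b" using S by (auto simp: D_def)
      show "fscale (u w) w a = (if w = v then u w else 0)"
      proof (cases "b = a")
        case True then show ?thesis using a b by (simp add: fscale_def dlt_def)
      next
        case False
        have wv: "w \<noteq> v" using a(2) b False dlt_eq[of b a] by simp
        have "fscale (u w) w a = 0" using b False by (simp add: fscale_def dlt_def)
        then show ?thesis using wv by simp
      qed
    qed simp
    then have "(\<Sum>w\<in>S. fscale (u w) w) a = u v" using v S(2) by simp
    then show "u v = 0" using su by simp
  qed
  have spanGD: "fspan (G ` D) = G ` fspan D"
    using module_hom.span_image[OF hom] by (simp add: fspan_def)
  have indGD: "fs.independent (G ` D)"
  proof
    assume "fs.dependent (G ` D)"
    then have "fs.dependent D" using module_hom.dependent_inj_imageD[OF hom, of D] injG spanD by (simp add: fspan_def)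
    then show False using indD by simp
  qed
  have dimC: "fdim C = k"
  proof -
    have sC: "fspan C = C" using sub fs.span_eq_iff by blast
    have "fspan (G ` D) = C" using spanGD spanD C_def by simp
    then have "fspan (G ` D) = fspan C" using sC by (simp only:)
    then have "fdim C = card (G ` D)" using fs.dim_eq_card indGD by metis
    also have "\<dots> = card D" using inj_on_subset[OF injG DA] by (simp add: card_image)
    finally show ?thesis using cD by simp
  qed
  have nd: "non_degenerate N C"
    unfolding non_degenerate_def
  proof (intro allI impI)
    fix j assume j: "j < N"
    obtain i where i: "i < t" "j \<in> blk i" using blk_cover j N_def by blast
    define r where "r = e i"
    have rR: "r \<in> Rset k" using eR[OF i(1)] r_def R_def by simp
    define a where "a = lead r"
    have ak: "a < k" using rR lead_lt unfolding a_def Rset_def by blast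
    have "G (dlt a) j = r a" using Gm_val[OF i, of k e "dlt a"] dot_dlt_l[OF ak] by (simp add: G_def r_def)
    then have "G (dlt a) j = 1" using rR by (simp add: Rset_def a_def)
    moreover have "dlt a \<in> ambient k" using ak by (auto simp: ambient_def dlt_def)
    ultimately show "\<exists>c\<in>C. c j \<noteq> 0" unfolding C_def by force
  qed
  have CG: "C - {0} = G ` (ambient k - {0})"
  proof (intro equalityI subsetI)
    fix c assume "c \<in> C - {0}"
    then obtain x where x: "x \<in> ambient k" "c = G x" "c \<noteq> 0" by (auto simp: C_def)
    then have "x \<noteq> 0" using G0 by auto
    then show "c \<in> G ` (ambient k - {0})" using x by blast
  next
    fix c assume "c \<in> G ` (ambient k - {0})"
    then obtain x where x: "x \<in> ambient k" "x \<noteq> 0" "c = G x" by blast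
    then show "c \<in> C - {0}" using Gz[OF x(1,2)] by (auto simp: C_def)
  qed
  have ws: "weight_set N C = W ` R"
  proof -
    have "weight_set N C = hweight N ` G ` (ambient k - {0})" by (simp add: weight_set_def CG)
    also have "\<dots> = W ` (ambient k - {0})" by (simp add: image_image hw)
    also have "\<dots> = W ` R"
    proof
      show "W ` R \<subseteq> W ` (ambient k - {0})" using Rset_sub R_def by blast
      show "W ` (ambient k - {0}) \<subseteq> W ` R"
      proof
        fix w assume "w \<in> W ` (ambient k - {0})"
        then obtain v where v: "v \<in> ambient k" "v \<noteq> 0" "w = W v" by blast
        obtain c r where cr: "c \<noteq> 0" "r \<in> Rset k" "v = fscale c r" using decomp[OF v(1,2)] by blast
        have "W v = W r" using cr Ascale by (simp add: W_def)
        then show "w \<in> W ` R" using cr(2) v(3) R_def by blast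
      qed
    qed
    finally show ?thesis .
  qed
  have cws: "card (weight_set N C) = t" using ws card_image[OF injW] cardR by simp
  show ?thesis
    unfolding MWS_code_def linear_code_def
    apply (rule exI[of _ C])
    using CA sub dimC nd cws by (simp add: N_def t_def q_def)
qed

end
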